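(* There is an absolute constant $c$ such that for every positive integer $n$ and every out-directed tree $T$ on $m$ vertices, $$\mathrm{R}(\vec{P}_n,T)\le c(n+m).$$
   Context: $\vec{P}_n$ denotes the directed path on $n$ vertices. An out-directed tree is an oriented tree (underlying graph a tree, no bidirected edges) with a vertex $r$ such that all edges are directed away from $r$. $\mathrm{R}(G_1,G_2)$ is the least $N$ such that every red/blue colouring of the edges of the complete directed graph $\overleftrightarrow{K}_N$ (edge $xy$ for every ordered pair of distinct vertices) contains a red copy of $G_1$ or a blue copy of $G_2$. *)

theory Defs
  imports Complex_Main
begin

(* A red/blue colouring of the complete directed graph on vertex set {0..<N}:
   col x y = True means the directed edge xy (x \<noteq> y) is red, False means blue. *)

definition has_red_dipath :: "nat \<Rightarrow> (nat \<Rightarrow> nat \<Rightarrow> bool) \<Rightarrow> nat \<Rightarrow> bool" where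
  "has_red_dipath N col n \<longleftrightarrow>
     (\<exists>v :: nat \<Rightarrow> nat. inj_on v {0..<n} \<and> v ` {0..<n} \<subseteq> {0..<N} \<and>
        (\<forall>i. Suc i < n \<longrightarrow> col (v i) (v (Suc i))))"

definition has_blue_copy :: "nat \<Rightarrow> (nat \<Rightarrow> nat \<Rightarrow> bool) \<Rightarrow> nat set \<Rightarrow> (nat \<times> nat) set \<Rightarrow> bool" where
  "has_blue_copy N col V E \<longleftrightarrow>
     (\<exists>f :: nat \<Rightarrow> nat. inj_on f V \<and> f ` V \<subseteq> {0..<N} \<and>
        (\<forall>(u,w)\<in>E. \<not> col (f u) (f w)))"

definition ramsey_prop :: "nat \<Rightarrow> nat set \<Rightarrow> (nat \<times> nat) set \<Rightarrow> nat \<Rightarrow> bool" where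
  "ramsey_prop n V E N \<longleftrightarrow>
     (\<forall>col. has_red_dipath N col n \<or> has_blue_copy N col V E)"

definition dir_ramsey :: "nat \<Rightarrow> nat set \<Rightarrow> (nat \<times> nat) set \<Rightarrow> nat" where
  "dir_ramsey n V E = (LEAST N. ramsey_prop n V E N)"

definition oriented_tree :: "nat set \<Rightarrow> (nat \<times> nat) set \<Rightarrow> bool" where
  "oriented_tree V E \<longleftrightarrow>
     finite V \<and> V \<noteq> {} \<and> E \<subseteq> V \<times> V \<and>
     (\<forall>x. (x,x) \<notin> E) \<and> (\<forall>x y. (x,y) \<in> E \<longrightarrow> (y,x) \<notin> E) \<and>
     (\<forall>u\<in>V. \<forall>w\<in>V. (u,w) \<in> (E \<union> E\<inverse>)\<^sup>*) \<and>
     card E = card V - 1"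

definition out_tree :: "nat set \<Rightarrow> (nat \<times> nat) set \<Rightarrow> bool" where
  "out_tree V E \<longleftrightarrow> oriented_tree V E \<and> (\<exists>r\<in>V. \<forall>v\<in>V. (r,v) \<in> E\<^sup>*)"

end

theory Submission
  imports Defs
begin


definition rpath :: "(nat \<Rightarrow> nat \<Rightarrow> bool) \<Rightarrow> nat list \<Rightarrow> bool" where
  "rpath col p \<longleftrightarrow> (\<forall>i. Suc i < length p \<longrightarrow> col (p!i) (p!Suc i))"

lemma rpath_snoc: "rpath col (P @ [y]) \<longleftrightarrow> rpath col P \<and> (P \<noteq> [] \<longrightarrow> col (last P) y)"
  unfolding rpath_def
proof (intro iffI conjI impI allI)
  assume h: "\<forall>i. Suc i < length (P @ [y]) \<longrightarrow> col ((P @ [y]) ! i) ((P @ [y]) ! Suc i)"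
  fix i assume "Suc i < length P"
  with h[rule_format, of i] show "col (P ! i) (P ! Suc i)" by (simp add: nth_append)
next
  assume h: "\<forall>i. Suc i < length (P @ [y]) \<longrightarrow> col ((P @ [y]) ! i) ((P @ [y]) ! Suc i)"
    and ne: "P \<noteq> []"
  with h[rule_format, of "length P - 1"] show "col (last P) y"
    by (simp add: nth_append last_conv_nth)
next
  assume h: "(\<forall>i. Suc i < length P \<longrightarrow> col (P ! i) (P ! Suc i)) \<and> (P \<noteq> [] \<longrightarrow> col (last P) y)"
  fix i assume i: "Suc i < length (P @ [y])"
  show "col ((P @ [y]) ! i) ((P @ [y]) ! Suc i)"
  proof (cases "Suc i < length P")
    case True then show ?thesis using h by (simp add: nth_append)
  next
    case False
    then have si: "Suc i = length P" using i by simp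
    then have "i = length P - 1" "P \<noteq> []" by auto
    then show ?thesis using h si by (simp add: nth_append last_conv_nth)
  qed
qed

lemma rpath_Cons: "rpath col (u # p) \<longleftrightarrow> rpath col p \<and> (p \<noteq> [] \<longrightarrow> col u (hd p))"
  unfolding rpath_def
proof (intro iffI conjI impI allI)
  assume h: "\<forall>i. Suc i < length (u # p) \<longrightarrow> col ((u # p) ! i) ((u # p) ! Suc i)"
  fix i assume "Suc i < length p"
  with h[rule_format, of "Suc i"] show "col (p ! i) (p ! Suc i)" by simp
next
  assume h: "\<forall>i. Suc i < length (u # p) \<longrightarrow> col ((u # p) ! i) ((u # p) ! Suc i)" and "p \<noteq> []"
  with h[rule_format, of 0] show "col u (hd p)" by (simp add: hd_conv_nth)
next
  assume h: "(\<forall>i. Suc i < length p \<longrightarrow> col (p ! i) (p ! Suc i)) \<and> (p \<noteq> [] \<longrightarrow> col u (hd p))"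
  fix i assume i: "Suc i < length (u # p)"
  show "col ((u # p) ! i) ((u # p) ! Suc i)"
  proof (cases i)
    case 0 then show ?thesis using h i by (simp add: hd_conv_nth)
  next
    case (Suc i') then show ?thesis using h i by simp
  qed
qed

lemma no_long:
  assumes "\<not> has_red_dipath N col n" "distinct p" "set p \<subseteq> {0..<N}" "rpath col p"
  shows "length p < n"
proof (rule ccontr)
  assume "\<not> length p < n"
  then have ln: "n \<le> length p" by simp
  have "inj_on ((!) p) {0..<n}" using assms(2) ln by (intro inj_on_nth) auto
  moreover have "(!) p ` {0..<n} \<subseteq> {0..<N}" using assms(3) ln by (auto intro!: nth_mem[THEN subsetD[OF assms(3)]] )
  moreover have "\<forall>i. Suc i < n \<longrightarrow> col (p ! i) (p ! Suc i)" using assms(4) ln unfolding rpath_def by auto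
  ultimately have "has_red_dipath N col n" unfolding has_red_dipath_def by blast
  with assms(1) show False by simp
qed

definition posn :: "nat list \<Rightarrow> nat \<Rightarrow> nat" where
  "posn xs v = (LEAST i. i < length xs \<and> xs ! i = v)"

lemma posn_nth: assumes "distinct xs" "i < length xs" shows "posn xs (xs ! i) = i"
  unfolding posn_def
proof (rule Least_equality)
  show "i < length xs \<and> xs ! i = xs ! i" using assms by simp
  fix j assume "j < length xs \<and> xs ! j = xs ! i"
  then show "i \<le> j" using assms nth_eq_iff_index_eq by fastforce
qed

lemma posn_in: assumes "distinct xs" "v \<in> set xs"
  shows "posn xs v < length xs" "xs ! posn xs v = v"
proof -
  obtain i where i: "i < length xs" "xs ! i = v" using assms(2) by (auto simp: in_set_conv_nth)
  then show "posn xs v < length xs" "xs ! posn xs v = v" using posn_nth[OF assms(1) i(1)] by auto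
qed

lemma posn_Cons: assumes "distinct (t # rest)" "v \<in> set rest"
  shows "posn (t # rest) v = Suc (posn rest v)"
proof -
  have d: "distinct rest" using assms by simp
  have "posn (t # rest) ((t # rest) ! Suc (posn rest v)) = Suc (posn rest v)"
    using posn_nth[OF assms(1), of "Suc (posn rest v)"] posn_in[OF d assms(2)] by simp
  then show ?thesis using posn_in[OF d assms(2)] by simp
qed

lemma posn_Cons_hd: "posn (t # rest) t = 0"
  unfolding posn_def by (rule Least_equality) auto




definition chainok :: "(nat \<Rightarrow> nat \<Rightarrow> bool) \<Rightarrow> nat list \<Rightarrow> nat \<Rightarrow> bool" where
  "chainok col xs i \<longleftrightarrow> (\<exists>c. rpath col c \<and> c \<noteq> [] \<and> last c = xs ! i \<and> set c \<subseteq> set xs \<and>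
      (\<forall>l. Suc l < length c \<longrightarrow> posn xs (c ! Suc l) < posn xs (c ! l)) \<and>
      (\<forall>j. i < j \<longrightarrow> j < length xs \<longrightarrow> col (xs ! i) (xs ! j) \<longrightarrow> xs ! j \<in> set c))"

lemma dfs:
  "finite U \<Longrightarrow> distinct P \<Longrightarrow> rpath col P \<Longrightarrow> set P \<inter> U = {} \<Longrightarrow>
   \<exists>xs. distinct xs \<and> set xs = U \<union> set P \<and>
     (\<forall>a b. a < b \<longrightarrow> b < length P \<longrightarrow> posn xs (P ! b) < posn xs (P ! a)) \<and>
     (\<forall>i < length xs. chainok col xs i)"
proof (induction "2 * card U + length P" arbitrary: U P rule: less_induct)
  case less
  show ?case
  proof (cases "P = []")
    case True
    show ?thesis
    proof (cases "U = {}")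
      case True
      then show ?thesis using \<open>P = []\<close> by (intro exI[of _ "[]"]) auto
    next
      case False
      then obtain v where v: "v \<in> U" by auto
      have cu: "card U > 0" using False less.prems(1) by (simp add: card_gt_0_iff)
      have "2 * card (U - {v}) + length [v] < 2 * card U + length P"
        using \<open>P = []\<close> v less.prems(1) cu by (simp add: card_Diff_singleton)
      moreover have "rpath col [v]" by (simp add: rpath_def)
      ultimately obtain xs where xs: "distinct xs" "set xs = (U - {v}) \<union> set [v]"
        "\<forall>i < length xs. chainok col xs i"
        using less.hyps[of "U - {v}" "[v]"] less.prems(1) by auto
      then show ?thesis using \<open>P = []\<close> v by (intro exI[of _ xs]) auto
    qed
  next
    case False
    then obtain P' t where Pt: "P = P' @ [t]" by (metis rev_exhaust)
    show ?thesis
    proof (cases "\<exists>y\<in>U. col t y")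
      case True
      then obtain y where y: "y \<in> U" "col t y" by auto
      have cu: "card U > 0" using y less.prems(1) by (auto simp: card_gt_0_iff)
      have m: "2 * card (U - {y}) + length (P @ [y]) < 2 * card U + length P"
        using y less.prems(1) cu by (simp add: card_Diff_singleton)
      have rp: "rpath col (P @ [y])" using less.prems(3) y Pt rpath_snoc[of col P y] by simp
      have d: "distinct (P @ [y])" using less.prems(2,4) y by auto
      have dj: "set (P @ [y]) \<inter> (U - {y}) = {}" using less.prems(4) by auto
      obtain xs where xs: "distinct xs" "set xs = (U - {y}) \<union> set (P @ [y])"
        "\<forall>a b. a < b \<longrightarrow> b < length (P @ [y]) \<longrightarrow> posn xs ((P @ [y]) ! b) < posn xs ((P @ [y]) ! a)"
        "\<forall>i < length xs. chainok col xs i"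
        using less.hyps[OF m _ d rp dj] less.prems(1) by auto
      have "\<forall>a b. a < b \<longrightarrow> b < length P \<longrightarrow> posn xs (P ! b) < posn xs (P ! a)"
      proof (intro allI impI)
        fix a b assume ab: "a < b" "b < length P"
        then show "posn xs (P ! b) < posn xs (P ! a)" using xs(3)[rule_format, of a b] by (simp add: nth_append)
      qed
      then show ?thesis using xs y by (intro exI[of _ xs]) auto
    next
      case False
      have m: "2 * card U + length P' < 2 * card U + length P" using Pt by simp
      have rp: "rpath col P'" using less.prems(3) Pt by (simp add: rpath_snoc)
      have d: "distinct P'" using less.prems(2) Pt by simp
      have dj: "set P' \<inter> U = {}" using less.prems(4) Pt by auto
      obtain rest where rest: "distinct rest" "set rest = U \<union> set P'"
        "\<forall>a b. a < b \<longrightarrow> b < length P' \<longrightarrow> posn rest (P' ! b) < posn rest (P' ! a)"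
        "\<forall>i < length rest. chainok col rest i"
        using less.hyps[OF m less.prems(1) d rp dj] by auto
      have tn: "t \<notin> set rest" using rest(2) less.prems(2,4) Pt by auto
      define xs where "xs = t # rest"
      have dxs: "distinct xs" using tn rest(1) xs_def by simp
      have pc: "\<And>v. v \<in> set rest \<Longrightarrow> posn xs v = Suc (posn rest v)"
        using posn_Cons dxs xs_def by simp
      have p0: "posn xs t = 0" using xs_def posn_Cons_hd by simp
      have III: "\<forall>a b. a < b \<longrightarrow> b < length P \<longrightarrow> posn xs (P ! b) < posn xs (P ! a)"
      proof (intro allI impI)
        fix a b assume ab: "a < b" "b < length P"
        have a': "a < length P'" using ab Pt by simp
        have Pa: "P ! a = P' ! a" "P' ! a \<in> set rest" using a' Pt rest(2) by (auto simp: nth_append)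
        show "posn xs (P ! b) < posn xs (P ! a)"
        proof (cases "b < length P'")
          case True
          have "P ! b = P' ! b" "P' ! b \<in> set rest" using True Pt rest(2) by (auto simp: nth_append)
          then show ?thesis using Pa pc rest(3) ab True by auto
        next
          case False
          then have "P ! b = t" using ab Pt by (simp add: nth_append)
          then show ?thesis using Pa pc p0 by simp
        qed
      qed
      have II: "\<forall>i < length xs. chainok col xs i"
      proof (intro allI impI)
        fix i assume i: "i < length xs"
        show "chainok col xs i"
        proof (cases i)
          case 0
          have "rpath col P" "P \<noteq> []" "last P = xs ! i" "set P \<subseteq> set xs"
            using less.prems(3) Pt 0 xs_def rest(2) by auto
          moreover have "\<forall>l. Suc l < length P \<longrightarrow> posn xs (P ! Suc l) < posn xs (P ! l)"
            using III by auto
          moreover have "\<forall>j. i < j \<longrightarrow> j < length xs \<longrightarrow> col (xs ! i) (xs ! j) \<longrightarrow> xs ! j \<in> set P"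
          proof (intro allI impI)
            fix j assume j: "i < j" "j < length xs" "col (xs ! i) (xs ! j)"
            then obtain j' where j': "j = Suc j'" "j' < length rest" using xs_def 0 by (cases j) auto
            have "xs ! j \<in> set rest" using j' xs_def by simp
            moreover have "xs ! j \<notin> U" using False j 0 xs_def by auto
            ultimately show "xs ! j \<in> set P" using rest(2) Pt by auto
          qed
          ultimately show ?thesis unfolding chainok_def by blast
        next
          case (Suc i')
          have "i' < length rest" using i Suc xs_def by simp
          then obtain c where c: "rpath col c" "c \<noteq> []" "last c = rest ! i'" "set c \<subseteq> set rest"
            "\<forall>l. Suc l < length c \<longrightarrow> posn rest (c ! Suc l) < posn rest (c ! l)"
            "\<forall>j. i' < j \<longrightarrow> j < length rest \<longrightarrow> col (rest ! i') (rest ! j) \<longrightarrow> rest ! j \<in> set c"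
            using rest(4) unfolding chainok_def by blast
          have "last c = xs ! i" using c(3) Suc xs_def by simp
          moreover have "set c \<subseteq> set xs" using c(4) xs_def by auto
          moreover have "\<forall>l. Suc l < length c \<longrightarrow> posn xs (c ! Suc l) < posn xs (c ! l)"
          proof (intro allI impI)
            fix l assume l: "Suc l < length c"
            then have "c ! Suc l \<in> set rest" "c ! l \<in> set rest" using c(4) nth_mem by (auto dest!: subsetD[OF c(4)]) 
            then show "posn xs (c ! Suc l) < posn xs (c ! l)" using pc c(5) l by simp
          qed
          moreover have "\<forall>j. i < j \<longrightarrow> j < length xs \<longrightarrow> col (xs ! i) (xs ! j) \<longrightarrow> xs ! j \<in> set c"
          proof (intro allI impI)
            fix j assume j: "i < j" "j < length xs" "col (xs ! i) (xs ! j)"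
            then obtain j' where j': "j = Suc j'" using Suc by (cases j) auto
            then show "xs ! j \<in> set c" using c(6)[rule_format, of j'] j Suc xs_def by simp
          qed
          ultimately show ?thesis using c(1,2) unfolding chainok_def by blast
        qed
      qed
      show ?thesis using dxs III II rest(2) Pt xs_def by (intro exI[of _ xs]) auto
    qed
  qed
qed




lemma take_index: assumes "distinct xs" "i < length xs" "xs ! i \<in> set (take k xs)" shows "i < k"
proof -
  obtain j where j: "j < length (take k xs)" "take k xs ! j = xs ! i" using assms(3) by (auto simp: in_set_conv_nth)
  then have "j < k" "j < length xs" "xs ! j = xs ! i" by auto
  then have "j = i" using assms(1,2) nth_eq_iff_index_eq by blast
  then show ?thesis using \<open>j < k\<close> by simp
qed

locale dfsctx =
  fixes N :: nat and col :: "nat \<Rightarrow> nat \<Rightarrow> bool" and n :: nat and xs :: "nat list"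
  assumes nored: "\<not> has_red_dipath N col n"
    and dxs: "distinct xs" and sxs: "set xs = {0..<N}"
    and chains: "\<forall>i < length xs. chainok col xs i"
begin

definition Pre where "Pre v = set (take (Suc (posn xs v)) xs)"
definition LP where "LP v = {length p | p. distinct p \<and> rpath col p \<and> p \<noteq> [] \<and> hd p = v \<and> set p \<subseteq> Pre v}"
definition g where "g v = Max (LP v)"

lemma lenxs: "length xs = N" using dxs sxs distinct_card by fastforce

lemma LP_fin: "finite (LP v)"
proof -
  have "LP v \<subseteq> length ` {p. set p \<subseteq> Pre v \<and> distinct p}" unfolding LP_def by auto
  moreover have "finite {p. set p \<subseteq> Pre v \<and> distinct p}" by (rule finite_subset_distinct) (simp add: Pre_def)
  ultimately show ?thesis by (meson finite_imageI finite_subset)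
qed

lemma v_Pre: assumes "v \<in> set xs" shows "v \<in> Pre v"
proof -
  have "posn xs v < length xs" "xs ! posn xs v = v" using posn_in[OF dxs assms] by auto
  then have "take (Suc (posn xs v)) xs ! posn xs v = v" "posn xs v < length (take (Suc (posn xs v)) xs)" by auto
  then show ?thesis unfolding Pre_def by (metis nth_mem)
qed

lemma one_LP: assumes "v \<in> set xs" shows "1 \<in> LP v"
proof -
  have "[v] \<noteq> [] \<and> distinct [v] \<and> rpath col [v] \<and> hd [v] = v \<and> set [v] \<subseteq> Pre v"
    using v_Pre[OF assms] by (simp add: rpath_def)
  then show ?thesis unfolding LP_def by force
qed

lemma g_ge1: assumes "v \<in> set xs" shows "1 \<le> g v"
  unfolding g_def using one_LP[OF assms] LP_fin by (simp add: Max_ge)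

lemma g_lt: assumes "v \<in> set xs" shows "g v < n"
proof -
  have "LP v \<noteq> {}" using one_LP[OF assms] by auto
  then have "g v \<in> LP v" unfolding g_def using LP_fin Max_in by blast
  then obtain p where p: "g v = length p" "distinct p" "rpath col p" "set p \<subseteq> Pre v" unfolding LP_def by auto
  have "set p \<subseteq> {0..<N}" using p(4) set_take_subset[of _ xs] sxs unfolding Pre_def by blast
  then show ?thesis using no_long[OF nored p(2) _ p(3)] p(1) by simp
qed

lemma g_key: assumes "u \<in> set xs" "w \<in> set xs" "col u w" "posn xs w < posn xs u"
  shows "g w < g u"
proof -
  have "LP w \<noteq> {}" using one_LP[OF assms(2)] by auto
  then have "g w \<in> LP w" unfolding g_def using LP_fin Max_in by blast
  then obtain p where p: "g w = length p" "distinct p" "rpath col p" "p \<noteq> []" "hd p = w" "set p \<subseteq> Pre w"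
    unfolding LP_def by auto
  have pu: "posn xs u < length xs" "xs ! posn xs u = u" using posn_in[OF dxs assms(1)] by auto
  have "u \<notin> Pre w"
  proof
    assume "u \<in> Pre w"
    then have "posn xs u < Suc (posn xs w)" using take_index[OF dxs pu(1)] pu(2) unfolding Pre_def by simp
    then show False using assms(4) by simp
  qed
  then have "u \<notin> set p" using p(6) by auto
  have sub: "Pre w \<subseteq> Pre u" unfolding Pre_def using assms(4) by (simp add: set_take_subset_set_take)
  have "distinct (u # p) \<and> rpath col (u # p) \<and> u # p \<noteq> [] \<and> hd (u # p) = u \<and> set (u # p) \<subseteq> Pre u"
    using \<open>u \<notin> set p\<close> p sub v_Pre[OF assms(1)] assms(3) by (auto simp: rpath_Cons)
  then have "length (u # p) \<in> LP u" unfolding LP_def by blast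
  then have "length (u # p) \<le> g u" unfolding g_def using LP_fin by simp
  then show ?thesis using p(1) by simp
qed

lemma chain_dec:
  assumes c: "rpath col c" "set c \<subseteq> set xs" "\<forall>l. Suc l < length c \<longrightarrow> posn xs (c ! Suc l) < posn xs (c ! l)"
  shows "l < l' \<Longrightarrow> l' < length c \<Longrightarrow> g (c ! l') < g (c ! l)"
proof (induction l' arbitrary: l)
  case 0 then show ?case by simp
next
  case (Suc l')
  have st: "g (c ! Suc l') < g (c ! l')"
  proof (rule g_key)
    show "c ! l' \<in> set xs" "c ! Suc l' \<in> set xs" using Suc.prems c(2) nth_mem by (auto dest!: subsetD[OF c(2)])
    show "col (c ! l') (c ! Suc l')" using c(1) Suc.prems unfolding rpath_def by auto
    show "posn xs (c ! Suc l') < posn xs (c ! l')" using c(3) Suc.prems by auto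
  qed
  show ?case
  proof (cases "l = l'")
    case True then show ?thesis using st by simp
  next
    case False
    then have "l < l'" using Suc.prems by simp
    then have "g (c ! l') < g (c ! l)" using Suc.IH Suc.prems by simp
    then show ?thesis using st by simp
  qed
qed

lemma chain_inj:
  assumes c: "rpath col c" "set c \<subseteq> set xs" "\<forall>l. Suc l < length c \<longrightarrow> posn xs (c ! Suc l) < posn xs (c ! l)"
    and a: "a \<in> set c" "b \<in> set c" "a \<noteq> b"
  shows "g a \<noteq> g b"
proof -
  obtain i j where ij: "i < length c" "c ! i = a" "j < length c" "c ! j = b" using a by (auto simp: in_set_conv_nth)
  then have "i \<noteq> j" using a(3) by auto
  then show ?thesis using chain_dec[OF c] ij by (metis less_irrefl_nat nat_neq_iff)
qed

definition key where "key v = g v * N + posn xs v"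

definition ys where "ys = sort_key key xs"

lemma ys_basic: "distinct ys" "set ys = {0..<N}" "length ys = N"
  using dxs sxs lenxs unfolding ys_def by auto

lemma posn_inj: assumes "a \<in> set xs" "b \<in> set xs" "posn xs a = posn xs b" shows "a = b"
  using posn_in[OF dxs assms(1)] posn_in[OF dxs assms(2)] assms(3) by metis

lemma key_lt: assumes "j < j'" "j' < N" shows "key (ys ! j) < key (ys ! j')"
proof -
  have "sorted (map key ys)" unfolding ys_def by simp
  then have le: "key (ys ! j) \<le> key (ys ! j')" using assms ys_basic(3) sorted_nth_mono[of "map key ys" j j'] by simp
  have ne: "ys ! j \<noteq> ys ! j'" using ys_basic assms nth_eq_iff_index_eq by fastforce
  have inx: "ys ! j \<in> set xs" "ys ! j' \<in> set xs" using ys_basic sxs assms by auto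
  have "posn xs (ys ! j) < N" "posn xs (ys ! j') < N" using posn_in[OF dxs] inx lenxs by auto
  have "key (ys ! j) \<noteq> key (ys ! j')"
  proof
    assume e: "key (ys ! j) = key (ys ! j')"
    have m1: "key (ys ! j) mod N = posn xs (ys ! j)" unfolding key_def using \<open>posn xs (ys ! j) < N\<close> by simp
    have m2: "key (ys ! j') mod N = posn xs (ys ! j')" unfolding key_def using \<open>posn xs (ys ! j') < N\<close> by simp
    have "posn xs (ys ! j) = posn xs (ys ! j')" using e m1 m2 by simp
    then show False using posn_inj inx ne by blast
  qed
  then show ?thesis using le by simp
qed

lemma key_g: assumes "j < j'" "j' < N"
  shows "g (ys ! j) \<le> g (ys ! j')" "g (ys ! j) = g (ys ! j') \<Longrightarrow> posn xs (ys ! j) < posn xs (ys ! j')"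
proof -
  have inx: "ys ! j \<in> set xs" "ys ! j' \<in> set xs" using ys_basic sxs assms by auto
  have pj: "posn xs (ys ! j) < N" "posn xs (ys ! j') < N" using posn_in[OF dxs] inx lenxs by auto
  have k: "g (ys ! j) * N + posn xs (ys ! j) < g (ys ! j') * N + posn xs (ys ! j')"
    using key_lt[OF assms] unfolding key_def .
  show "g (ys ! j) \<le> g (ys ! j')"
  proof (rule ccontr)
    assume "\<not> ?thesis"
    then have "Suc (g (ys ! j')) \<le> g (ys ! j)" by simp
    then have "Suc (g (ys ! j')) * N \<le> g (ys ! j) * N" by (rule mult_le_mono1)
    then have "g (ys ! j') * N + N \<le> g (ys ! j) * N" by simp
    then show False using k pj by linarith
  qed
  show "g (ys ! j) = g (ys ! j') \<Longrightarrow> posn xs (ys ! j) < posn xs (ys ! j')" using k by simp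
qed

lemma ys_in: "k < N \<Longrightarrow> ys ! k \<in> set xs"
  using ys_basic sxs nth_mem[of k ys] by simp

lemma ys_ne: "k < k' \<Longrightarrow> k' < N \<Longrightarrow> ys ! k \<noteq> ys ! k'"
  using ys_basic nth_eq_iff_index_eq[of ys k k'] by simp

lemma later: assumes "i < k" "k < N" "col (ys ! i) (ys ! k)"
  shows "posn xs (ys ! i) < posn xs (ys ! k)"
proof -
  have a: "ys ! i \<in> set xs" "ys ! k \<in> set xs" using ys_in assms by auto
  have ge: "g (ys ! i) \<le> g (ys ! k)" using key_g(1)[OF assms(1,2)] .
  have ne: "posn xs (ys ! k) \<noteq> posn xs (ys ! i)"
  proof
    assume "posn xs (ys ! k) = posn xs (ys ! i)"
    then have "ys ! k = ys ! i" by (rule posn_inj[OF a(2) a(1)])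
    with ys_ne[OF assms(1,2)] show False by simp
  qed
  have "\<not> posn xs (ys ! k) < posn xs (ys ! i)"
  proof
    assume "posn xs (ys ! k) < posn xs (ys ! i)"
    then have "g (ys ! k) < g (ys ! i)" by (rule g_key[OF a assms(3)])
    with ge show False by simp
  qed
  with ne show ?thesis by linarith
qed

lemma exc: assumes "i < j" "j < j'" "j' < N" "col (ys ! i) (ys ! j)" "col (ys ! i) (ys ! j')"
  shows "g (ys ! j) \<noteq> g (ys ! j')"
proof -
  have iN: "i < N" "j < N" using assms by auto
  have inx: "ys ! i \<in> set xs" using ys_in iN by simp
  have pu: "posn xs (ys ! i) < length xs" "xs ! posn xs (ys ! i) = ys ! i" using posn_in[OF dxs inx] by auto
  obtain c where c: "rpath col c" "set c \<subseteq> set xs"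
     "\<forall>l. Suc l < length c \<longrightarrow> posn xs (c ! Suc l) < posn xs (c ! l)"
     "\<forall>jj. posn xs (ys ! i) < jj \<longrightarrow> jj < length xs \<longrightarrow> col (xs ! posn xs (ys ! i)) (xs ! jj) \<longrightarrow> xs ! jj \<in> set c"
  proof -
    have "chainok col xs (posn xs (ys ! i))" using chains pu(1) by blast
    then show ?thesis unfolding chainok_def by (elim exE conjE) (rule that; assumption)
  qed
  have inc: "ys ! k \<in> set c" if k: "i < k" "k < N" "col (ys ! i) (ys ! k)" for k
  proof -
    have winx: "ys ! k \<in> set xs" using ys_in k by simp
    have p: "posn xs (ys ! i) < posn xs (ys ! k)" by (rule later[OF k])
    have q: "posn xs (ys ! k) < length xs" "xs ! posn xs (ys ! k) = ys ! k" using posn_in[OF dxs winx] by auto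
    have "xs ! posn xs (ys ! k) \<in> set c" using c(4)[rule_format, OF p q(1)] pu(2) q(2) k(3) by simp
    then show ?thesis using q(2) by simp
  qed
  have "ys ! j \<in> set c" using inc assms iN by simp
  moreover have "ys ! j' \<in> set c" using inc assms by simp
  moreover have "ys ! j \<noteq> ys ! j'" using ys_ne assms by simp
  ultimately show ?thesis by (rule chain_inj[OF c(1-3)])
qed

end

lemma red_structure:
  assumes "\<not> has_red_dipath N col n"
  shows "\<exists>ys g. distinct ys \<and> set ys = {0..<N} \<and> length ys = N \<and>
    (\<forall>j<N. 1 \<le> g (ys ! j) \<and> g (ys ! j) < n) \<and>
    (\<forall>j j'. j < j' \<longrightarrow> j' < N \<longrightarrow> g (ys ! j) \<le> g (ys ! j')) \<and>
    (\<forall>i j j'. i < j \<longrightarrow> j < j' \<longrightarrow> j' < N \<longrightarrow> col (ys ! i) (ys ! j) \<longrightarrow> col (ys ! i) (ys ! j') \<longrightarrow>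
        g (ys ! j) \<noteq> g (ys ! j'))"
proof -
  obtain xs where xs: "distinct xs" "set xs = {0..<N}" "\<forall>i < length xs. chainok col xs i"
    using dfs[of "{0..<N}" "[]" col] by (auto simp: rpath_def)
  interpret d: dfsctx N col n xs using assms xs by unfold_locales auto
  show ?thesis
    apply (rule exI[of _ d.ys], rule exI[of _ d.g])
  proof (intro conjI allI impI)
    fix j assume j: "j < N"
    then have "d.ys ! j \<in> set xs" using d.ys_basic xs(2) by (metis nth_mem)
    then show "1 \<le> d.g (d.ys ! j)" "d.g (d.ys ! j) < n" using d.g_ge1 d.g_lt by auto
  qed (use d.ys_basic d.key_g(1) d.exc in auto)
qed




lemma out_tree_facts:
  assumes ot: "out_tree V E"
  shows "\<exists>r\<in>V. (\<forall>v\<in>V. (r,v) \<in> E\<^sup>*) \<and> (\<forall>u. (u,r) \<notin> E) \<and>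
           (\<forall>u u' w. (u,w) \<in> E \<longrightarrow> (u',w) \<in> E \<longrightarrow> u = u')"
proof -
  have fV: "finite V" and EV: "E \<subseteq> V \<times> V" and cE: "card E = card V - 1"
    using ot unfolding out_tree_def oriented_tree_def by auto
  obtain r where r: "r \<in> V" "\<forall>v\<in>V. (r,v) \<in> E\<^sup>*" using ot unfolding out_tree_def by auto
  define I where "I w = {u. (u,w) \<in> E}" for w
  define c where "c w = card (I w)" for w
  have fI: "finite (I w)" for w using EV fV unfolding I_def by (metis (no_types, lifting) finite_subset mem_Collect_eq mem_Sigma_iff subset_eq)
  have Eeq: "E = (\<lambda>(w,u). (u,w)) ` (SIGMA w:V. I w)" using EV unfolding I_def by auto
  have inj: "inj_on (\<lambda>(w,u). (u,w)) (SIGMA w:V. I w)" by (auto simp: inj_on_def)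
  have cardE: "card E = (\<Sum>w\<in>V. c w)"
    unfolding Eeq c_def using card_image[OF inj] card_SigmaI[OF fV, of I] fI by simp
  have pos: "1 \<le> c w" if w: "w \<in> V" "w \<noteq> r" for w
  proof -
    have "(r,w) \<in> E\<^sup>*" using r w by auto
    then obtain u where "(u,w) \<in> E" using w(2) by (auto elim: rtranclE)
    then have "I w \<noteq> {}" unfolding I_def by auto
    then show ?thesis unfolding c_def using fI by (simp add: Suc_le_eq card_gt_0_iff)
  qed
  have s1: "(\<Sum>w\<in>V. c w) = c r + (\<Sum>w\<in>V-{r}. c w)" using sum.remove[OF fV r(1)] by simp
  have s2: "card (V - {r}) \<le> (\<Sum>w\<in>V-{r}. c w)"
    using sum_mono[of "V - {r}" "\<lambda>_. 1" c] pos by auto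
  have cV: "card (V - {r}) = card V - 1" using fV r(1) by simp
  have cr: "c r = 0" and s3: "(\<Sum>w\<in>V-{r}. c w) = card (V - {r})" using s1 s2 cV cE cardE by linarith+
  have "(\<Sum>w\<in>V-{r}. c w - 1) = (\<Sum>w\<in>V-{r}. c w) - (\<Sum>w\<in>V-{r}. 1)"
    by (rule sum_subtractf_nat) (use pos in auto)
  also have "\<dots> = 0" using s3 by simp
  finally have "\<forall>w\<in>V-{r}. c w - 1 = 0" using fV by simp
  then have c1: "c w = 1" if "w \<in> V" "w \<noteq> r" for w using pos[OF that] that by force
  have "\<forall>u. (u,r) \<notin> E" using cr fI unfolding c_def I_def by auto
  moreover have "\<forall>u u' w. (u,w) \<in> E \<longrightarrow> (u',w) \<in> E \<longrightarrow> u = u'"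
  proof (intro allI impI)
    fix u u' w assume e: "(u,w) \<in> E" "(u',w) \<in> E"
    then have w: "w \<in> V" using EV by auto
    have "w \<noteq> r" using e cr fI unfolding c_def I_def by auto
    then have "card (I w) = 1" using c1 w unfolding c_def by simp
    then obtain z where "I w = {z}" by (rule card_1_singletonE)
    then have "u \<in> {z}" "u' \<in> {z}" using e unfolding I_def by blast+
    then show "u = u'" by simp
  qed
  ultimately show ?thesis using r by blast
qed

lemma cross_edge:
  assumes "(r,v) \<in> E\<^sup>*" "r \<in> A" "v \<notin> A"
  shows "\<exists>p w. (p,w) \<in> E \<and> p \<in> A \<and> w \<notin> A"
  using assms
proof (induction rule: rtrancl_induct)
  case base then show ?case by simp
next
  case (step y z)
  show ?case
  proof (cases "y \<in> A")
    case True then show ?thesis using step by blast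
  next
    case False then show ?thesis using step by blast
  qed
qed


lemma run_lemma:
  fixes ys :: "nat list" and g :: "nat \<Rightarrow> nat"
  assumes gm: "\<forall>j j'. j < j' \<longrightarrow> j' < N \<longrightarrow> g (ys ! j) \<le> g (ys ! j')"
    and ge: "\<forall>i j j'. i < j \<longrightarrow> j < j' \<longrightarrow> j' < N \<longrightarrow> col (ys ! i) (ys ! j) \<longrightarrow> col (ys ! i) (ys ! j') \<longrightarrow>
        g (ys ! j) \<noteq> g (ys ! j')"
    and x: "x < lo" and hi: "hi < N"
    and allc: "\<forall>j. lo \<le> j \<longrightarrow> j \<le> hi \<longrightarrow> col (ys ! x) (ys ! j)"
  shows "lo + d \<le> hi \<Longrightarrow> g (ys ! lo) + d \<le> g (ys ! (lo + d))"
proof (induction d)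
  case 0 then show ?case by simp
next
  case (Suc d)
  have a: "g (ys ! lo) + d \<le> g (ys ! (lo + d))" using Suc by simp
  have le: "g (ys ! (lo + d)) \<le> g (ys ! (lo + Suc d))" using gm Suc.prems hi by simp
  have ne: "g (ys ! (lo + d)) \<noteq> g (ys ! (lo + Suc d))"
    using ge[rule_format, of x "lo + d" "lo + Suc d"] x Suc.prems hi allc by simp
  show ?case using a le ne by simp
qed

lemma embed:
  fixes ys :: "nat list" and g :: "nat \<Rightarrow> nat"
  assumes dys: "distinct ys" and sys: "set ys = {0..<N}" and lys: "length ys = N"
    and gb: "\<forall>j<N. 1 \<le> g (ys ! j) \<and> g (ys ! j) < n"
    and gm: "\<forall>j j'. j < j' \<longrightarrow> j' < N \<longrightarrow> g (ys ! j) \<le> g (ys ! j')"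
    and ge: "\<forall>i j j'. i < j \<longrightarrow> j < j' \<longrightarrow> j' < N \<longrightarrow> col (ys ! i) (ys ! j) \<longrightarrow> col (ys ! i) (ys ! j') \<longrightarrow>
        g (ys ! j) \<noteq> g (ys ! j')"
    and ot: "out_tree V E" and NN: "2 * (n + card V) \<le> N"
  shows "has_blue_copy N col V E"
proof -
  have fV: "finite V" and EV: "E \<subseteq> V \<times> V" and Vne: "V \<noteq> {}"
    using ot unfolding out_tree_def oriented_tree_def by auto
  obtain r where r: "r \<in> V" "\<forall>v\<in>V. (r,v) \<in> E\<^sup>*" "\<forall>u. (u,r) \<notin> E"
    "\<forall>u u' w. (u,w) \<in> E \<longrightarrow> (u',w) \<in> E \<longrightarrow> u = u'"
    using out_tree_facts[OF ot] by blast
  have cV: "1 \<le> card V" using fV Vne r(1) by (simp add: Suc_le_eq card_gt_0_iff)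
  have greedy: "1 \<le> k \<Longrightarrow> k \<le> card V \<Longrightarrow> (\<exists>A \<phi> M. A \<subseteq> V \<and> r \<in> A \<and> card A = k \<and>
      (\<forall>u w. (u,w) \<in> E \<longrightarrow> w \<in> A \<longrightarrow> u \<in> A) \<and> inj_on \<phi> A \<and> (\<forall>a\<in>A. \<phi> a \<le> M) \<and> M < N \<and>
      M \<le> 2 * (k - 1) + g (ys ! M) \<and>
      (\<forall>u w. (u,w) \<in> E \<longrightarrow> u \<in> A \<longrightarrow> w \<in> A \<longrightarrow> \<not> col (ys ! \<phi> u) (ys ! \<phi> w)))" for k
  proof (induction k)
    case 0 then show ?case by simp
  next
    case (Suc k)
    show ?case
    proof (cases "k = 0")
      case True
      have "0 < N" using NN cV by simp
      then show ?thesis using True r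
        by (intro exI[of _ "{r}"] exI[of _ "\<lambda>_. 0::nat"] exI[of _ "0::nat"]) auto
    next
      case False
      then obtain A \<phi> M where A: "A \<subseteq> V" "r \<in> A" "card A = k"
        "\<forall>u w. (u,w) \<in> E \<longrightarrow> w \<in> A \<longrightarrow> u \<in> A" "inj_on \<phi> A" "\<forall>a\<in>A. \<phi> a \<le> M" "M < N"
        "M \<le> 2 * (k - 1) + g (ys ! M)"
        "\<forall>u w. (u,w) \<in> E \<longrightarrow> u \<in> A \<longrightarrow> w \<in> A \<longrightarrow> \<not> col (ys ! \<phi> u) (ys ! \<phi> w)"
        using Suc by auto
      have fA: "finite A" using A(1) fV finite_subset by blast
      have "A \<noteq> V" using A(3) Suc.prems by auto
      then obtain v where v: "v \<in> V" "v \<notin> A" using A(1) by blast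
      obtain p w where pw: "(p,w) \<in> E" "p \<in> A" "w \<notin> A"
        using cross_edge[OF _ A(2) v(2)] r(2) v(1) by blast
      have wV: "w \<in> V" using pw(1) EV by auto
      define x where "x = \<phi> p"
      have xM: "x \<le> M" using A(6) pw(2) x_def by simp
      have gM: "g (ys ! M) < n" using gb A(7) by simp
      obtain K where K: "k = Suc K" using False by (cases k) auto
      have Mn: "M + n < N" using A(8) gM Suc.prems NN unfolding K by simp
      have ex: "\<exists>q. M < q \<and> q < N \<and> \<not> col (ys ! x) (ys ! q)"
      proof (rule ccontr)
        assume h: "\<not> ?thesis"
        have allc: "\<forall>j. Suc M \<le> j \<longrightarrow> j \<le> M + n \<longrightarrow> col (ys ! x) (ys ! j)"
          using h Mn by auto
        have n1: "1 \<le> n" using gb A(7) by fastforce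
        have "g (ys ! Suc M) + (n - 1) \<le> g (ys ! (Suc M + (n - 1)))"
          using run_lemma[OF gm ge _ Mn allc, of "n - 1"] xM n1 by simp
        moreover have "1 \<le> g (ys ! Suc M)" using gb Mn n1 by simp
        moreover have "g (ys ! (Suc M + (n - 1))) < n" using gb Mn n1 by simp
        ultimately show False using n1 by linarith
      qed
      define q where "q = (LEAST q. M < q \<and> q < N \<and> \<not> col (ys ! x) (ys ! q))"
      have q: "M < q" "q < N" "\<not> col (ys ! x) (ys ! q)"
        using LeastI_ex[OF ex] unfolding q_def by auto
      have qc: "col (ys ! x) (ys ! j)" if "M < j" "j < q" for j
      proof (rule ccontr)
        assume "\<not> col (ys ! x) (ys ! j)"
        then have "q \<le> j" unfolding q_def using that q(2) by (intro Least_le) simp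
        then show False using that by simp
      qed
      have bound: "q + g (ys ! M) \<le> M + 2 + g (ys ! q)"
      proof (cases "q = Suc M")
        case True
        have "g (ys ! M) \<le> g (ys ! Suc M)" using gm q True by simp
        then show ?thesis using True by simp
      next
        case False
        then have q2: "Suc M \<le> q - 1" "q - 1 < N" using q by auto
        have allc: "\<forall>j. Suc M \<le> j \<longrightarrow> j \<le> q - 1 \<longrightarrow> col (ys ! x) (ys ! j)"
          using qc q by auto
        have "g (ys ! Suc M) + (q - 1 - Suc M) \<le> g (ys ! (Suc M + (q - 1 - Suc M)))"
          using run_lemma[OF gm ge _ q2(2) allc, of "q - 1 - Suc M"] xM q2 by simp
        moreover have "Suc M + (q - 1 - Suc M) = q - 1" using q2 by simp
        moreover have "g (ys ! M) \<le> g (ys ! Suc M)" using gm q2 by simp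
        moreover have "g (ys ! (q - 1)) \<le> g (ys ! q)" using gm q q2 by simp
        ultimately show ?thesis using q2 by simp
      qed
      define \<phi>' where "\<phi>' = \<phi>(w := q)"
      have rest: "\<forall>u z. (u,z) \<in> E \<longrightarrow> z \<in> insert w A \<longrightarrow> u \<in> insert w A"
        using A(4) pw r(4) by blast
      have inj': "inj_on \<phi>' (insert w A)"
      proof -
        have "inj_on \<phi>' A" using A(5) pw(3) unfolding \<phi>'_def inj_on_def by auto
        moreover have "\<phi>' w \<notin> \<phi>' ` (A - {w})" using A(6) q(1) pw(3) unfolding \<phi>'_def by auto
        ultimately show ?thesis by simp
      qed
      have le': "\<forall>a\<in>insert w A. \<phi>' a \<le> q" using A(6) q(1) unfolding \<phi>'_def by auto
      have Mq: "q \<le> 2 * (Suc k - 1) + g (ys ! q)" using bound A(8) False by simp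
      have edges: "\<forall>u z. (u,z) \<in> E \<longrightarrow> u \<in> insert w A \<longrightarrow> z \<in> insert w A \<longrightarrow> \<not> col (ys ! \<phi>' u) (ys ! \<phi>' z)"
      proof (intro allI impI)
        fix u z assume e: "(u,z) \<in> E" "u \<in> insert w A" "z \<in> insert w A"
        show "\<not> col (ys ! \<phi>' u) (ys ! \<phi>' z)"
        proof (cases "z = w")
          case True
          then have "u = p" using r(4) e(1) pw(1) by blast
          then show ?thesis using True q(3) pw unfolding \<phi>'_def x_def by auto
        next
          case False
          then have zA: "z \<in> A" using e by simp
          then have uA: "u \<in> A" using A(4) e(1) by blast
          have "u \<noteq> w" "z \<noteq> w" using uA zA pw(3) by auto
          then show ?thesis using A(9) e(1) uA zA unfolding \<phi>'_def by simp
        qed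
      qed
      have "insert w A \<subseteq> V" "r \<in> insert w A" "card (insert w A) = Suc k"
        using A wV pw(3) fA by auto
      then show ?thesis using rest inj' le' q(2) Mq edges
        by (intro exI[of _ "insert w A"] exI[of _ \<phi>'] exI[of _ q]) auto
    qed
  qed
  obtain A \<phi> M where A: "A \<subseteq> V" "card A = card V" "inj_on \<phi> A" "\<forall>a\<in>A. \<phi> a \<le> M" "M < N"
    "\<forall>u w. (u,w) \<in> E \<longrightarrow> u \<in> A \<longrightarrow> w \<in> A \<longrightarrow> \<not> col (ys ! \<phi> u) (ys ! \<phi> w)"
    using greedy[OF cV order.refl] by blast
  have AV: "A = V" using A(1,2) fV card_subset_eq by blast
  define f where "f a = ys ! \<phi> a" for a
  have "inj_on ((!) ys) (\<phi> ` V)" using dys A(4,5) AV lys by (intro inj_on_nth) auto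
  then have "inj_on f V" using A(3) AV comp_inj_on[of \<phi> V "(!) ys"] unfolding f_def comp_def by simp
  moreover have "f ` V \<subseteq> {0..<N}"
  proof
    fix y assume "y \<in> f ` V"
    then obtain a where a: "a \<in> V" "y = ys ! \<phi> a" unfolding f_def by auto
    then have "\<phi> a < length ys" using A(4,5) AV lys by fastforce
    then have "y \<in> set ys" using a(2) nth_mem by simp
    then show "y \<in> {0..<N}" using sys by simp
  qed
  moreover have "\<forall>(u,w)\<in>E. \<not> col (f u) (f w)" using A(6) AV EV unfolding f_def by auto
  ultimately show ?thesis unfolding has_blue_copy_def by blast
qed


theorem mainTheorem15:
  shows "\<exists>c::real. \<forall>n::nat. \<forall>V E. n \<ge> 1 \<longrightarrow> out_tree V E \<longrightarrow>
           (\<exists>N. ramsey_prop n V E N) \<and>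
           real (dir_ramsey n V E) \<le> c * (real n + real (card V))"
proof (intro exI[of _ 2] allI impI)
  fix n :: nat and V E assume n: "n \<ge> 1" and ot: "out_tree V E"
  define N0 where "N0 = 2 * (n + card V)"
  have rp: "ramsey_prop n V E N0"
    unfolding ramsey_prop_def
  proof
    fix col
    show "has_red_dipath N0 col n \<or> has_blue_copy N0 col V E"
    proof (cases "has_red_dipath N0 col n")
      case True then show ?thesis by simp
    next
      case False
      obtain ys and g :: "nat \<Rightarrow> nat" where h: "distinct ys" "set ys = {0..<N0}" "length ys = N0"
        "\<forall>j<N0. 1 \<le> g (ys ! j) \<and> g (ys ! j) < n"
        "\<forall>j j'. j < j' \<longrightarrow> j' < N0 \<longrightarrow> g (ys ! j) \<le> g (ys ! j')"
        "\<forall>i j j'. i < j \<longrightarrow> j < j' \<longrightarrow> j' < N0 \<longrightarrow> col (ys ! i) (ys ! j) \<longrightarrow> col (ys ! i) (ys ! j') \<longrightarrow>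
          g (ys ! j) \<noteq> g (ys ! j')"
        using red_structure[OF False] by blast
      have "has_blue_copy N0 col V E"
        by (rule embed[OF h(1-6) ot]) (simp add: N0_def)
      then show ?thesis by simp
    qed
  qed
  have "dir_ramsey n V E \<le> N0" unfolding dir_ramsey_def by (rule Least_le) (rule rp)
  then have "real (dir_ramsey n V E) \<le> real N0" by simp
  then show "(\<exists>N. ramsey_prop n V E N) \<and> real (dir_ramsey n V E) \<le> 2 * (real n + real (card V))"
    using rp unfolding N0_def by auto
qed

end
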